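(* Let a nondegenerate triangle with circumcenter $O$ and circumradius $R$ be circumscribed about a central conic with foci $F_+,F_-$, and let $d_\pm=|OF_\pm|$. If $R^2=d_+d_-$, then the conic is a hyperbola.
   Context: A central conic is a non-degenerate ellipse or hyperbola. A triangle is circumscribed about a conic if each of its three sidelines is tangent to the conic. *)

theory Defs
  imports "HOL-Analysis.Analysis"
begin

datatype conic_kind = Ellipse | Hyperbola

definition conic_set :: "conic_kind \<Rightarrow> real^2 \<Rightarrow> real^2 \<Rightarrow> real \<Rightarrow> (real^2) set" where
  "conic_set k F1 F2 a =
     (case k of
        Ellipse \<Rightarrow> {P. dist P F1 + dist P F2 = 2 * a}
      | Hyperbola \<Rightarrow> {P. \<bar>dist P F1 - dist P F2\<bar> = 2 * a})"

text \<open>Non-degeneracy: ellipse needs 2a > |F1F2| (circle allowed when F1 = F2);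
  hyperbola needs 0 < 2a < |F1F2|.\<close>
definition valid_conic :: "conic_kind \<Rightarrow> real^2 \<Rightarrow> real^2 \<Rightarrow> real \<Rightarrow> bool" where
  "valid_conic k F1 F2 a =
     (case k of
        Ellipse \<Rightarrow> dist F1 F2 < 2 * a
      | Hyperbola \<Rightarrow> 0 < a \<and> 2 * a < dist F1 F2)"

text \<open>Gradient of the focal defining function |PF1| + |PF2| (ellipse) resp.
  |PF1| - |PF2| (hyperbola) at P (a normal vector of the conic at P).\<close>
definition conic_normal :: "conic_kind \<Rightarrow> real^2 \<Rightarrow> real^2 \<Rightarrow> real^2 \<Rightarrow> real^2" where
  "conic_normal k F1 F2 P =
     (case k of
        Ellipse \<Rightarrow> sgn (P - F1) + sgn (P - F2)
      | Hyperbola \<Rightarrow> sgn (P - F1) - sgn (P - F2))"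

definition line_through :: "real^2 \<Rightarrow> real^2 \<Rightarrow> (real^2) set" where
  "line_through X Y = {X + t *\<^sub>R (Y - X) | t. True}"

definition tangent_line :: "conic_kind \<Rightarrow> real^2 \<Rightarrow> real^2 \<Rightarrow> real \<Rightarrow> real^2 \<Rightarrow> real^2 \<Rightarrow> bool" where
  "tangent_line k F1 F2 a X Y =
     (\<exists>P. P \<in> conic_set k F1 F2 a \<and> P \<in> line_through X Y \<and>
          (Y - X) \<bullet> conic_normal k F1 F2 P = 0)"

end

theory Submission
  imports Defs
begin

lemma alg1:
  fixes a b c p q pc qc be :: complex
  assumes ab: "a \<noteq> b" and bc: "b \<noteq> c" and ca: "c \<noteq> a"
  and Eab: "(p + a*b*pc - a - b)*(q + a*b*qc - a - b) = 4*a*b*be"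
  and Ebc: "(p + b*c*pc - b - c)*(q + b*c*qc - b - c) = 4*b*c*be"
  and Eca: "(p + c*a*pc - c - a)*(q + c*a*qc - c - a) = 4*c*a*be"
  shows "a+b+c - (p+q) = pc*qc*(a*b*c)"
    and "4*be = 1 + p*qc + pc*q - (a+b+c)*(pc+qc) + (a*b+b*c+c*a)*pc*qc"
proof -
  define s1 where "s1 = a+b+c"
  define lam where "lam = 1 - s1*(pc+qc) + (p*qc+pc*q-4*be)"
  define mu where "mu = s1 - (p+q)"
  define G where "G = (\<lambda>x. -pc*qc*x^3+s1*pc*qc*x^2+lam*x+mu)"
  have "(b - c) * G a = 0"
  proof -
    have "(p + a*b*pc - a - b)*(q + a*b*qc - a - b) - 4*a*b*be
       - ((p + c*a*pc - c - a)*(q + c*a*qc - c - a) - 4*c*a*be) = (b-c)*G a"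
      unfolding G_def lam_def mu_def s1_def by (simp add: algebra_simps power2_eq_square power3_eq_cube)
    thus ?thesis using Eab Eca by simp
  qed
  hence Ga: "G a = 0" using bc by simp
  have "(c - a) * G b = 0"
  proof -
    have "(p + b*c*pc - b - c)*(q + b*c*qc - b - c) - 4*b*c*be
       - ((p + a*b*pc - a - b)*(q + a*b*qc - a - b) - 4*a*b*be) = (c-a)*G b"
      unfolding G_def lam_def mu_def s1_def by (simp add: algebra_simps power2_eq_square power3_eq_cube)
    thus ?thesis using Eab Ebc by simp
  qed
  hence Gb: "G b = 0" using ca by simp
  have "G a - G b = (a - b) * (pc*qc*(a*b+b*c+c*a) + lam)"
    unfolding G_def s1_def by (simp add: algebra_simps power2_eq_square power3_eq_cube)
  hence "(a - b) * (pc*qc*(a*b+b*c+c*a) + lam) = 0" using Ga Gb by simp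
  hence "pc*qc*(a*b+b*c+c*a) + lam = 0" using ab by simp
  hence lam: "lam = - pc*qc*(a*b+b*c+c*a)" by (simp add: eq_neg_iff_add_eq_0 add.commute)
  have "G a = mu - pc*qc*(a*b*c)"
    unfolding G_def lam s1_def by (simp add: algebra_simps power2_eq_square power3_eq_cube)
  hence mu: "mu = pc*qc*(a*b*c)" using Ga by simp
  show "a+b+c - (p+q) = pc*qc*(a*b*c)" using mu unfolding mu_def s1_def .
  show "4*be = 1 + p*qc + pc*q - (a+b+c)*(pc+qc) + (a*b+b*c+c*a)*pc*qc"
    using lam unfolding lam_def s1_def by (simp add: algebra_simps)
qed

lemma wcnj:
  fixes x y f :: complex
  assumes hx: "x * cnj x = 1" and hy: "y * cnj y = 1"
  shows "(f + x*y*cnj f - x - y) * cnj (y - x) = of_real (2 * Im (cnj (y-x) * (f-x))) * \<i>"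
proof -
  have "of_real (2 * Im (cnj (y-x) * (f-x))) * \<i> = cnj (y-x) * (f-x) - cnj (cnj (y-x) * (f-x))"
    by (simp only: complex_diff_cnj)
  also have "\<dots> = (cnj y - cnj x) * (f - x) - (y - x) * (cnj f - cnj x)" by simp
  finally have e: "of_real (2 * Im (cnj (y-x) * (f-x))) * \<i> = (cnj y - cnj x) * (f - x) - (y - x) * (cnj f - cnj x)" .
  have "(f + x*y*cnj f - x - y) * (cnj y - cnj x) = (cnj y - cnj x) * (f - x) - (y - x) * (cnj f - cnj x)"
    using hx hy by algebra
  thus ?thesis using e by simp
qed

lemma tang_complex:
  fixes x y f g :: complex and be :: real
  assumes hx: "x * cnj x = 1" and hy: "y * cnj y = 1" and xy: "x \<noteq> y"
  and h: "Im (cnj (y-x) * (f-x)) * Im (cnj (y-x) * (g-x)) = (cmod (y-x))^2 * be"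
  shows "(f + x*y*cnj f - x - y)*(g + x*y*cnj g - x - y) = 4*x*y*be"
proof -
  define u where "u = y - x"
  define w1 where "w1 = f + x*y*cnj f - x - y"
  define w2 where "w2 = g + x*y*cnj g - x - y"
  have u0: "u \<noteq> 0" and cu0: "cnj u \<noteq> 0" using xy by (auto simp: u_def)
  have "w1 * w2 * (cnj u * cnj u) = (w1 * cnj u) * (w2 * cnj u)" by (simp add: algebra_simps)
  also have "\<dots> = of_real (2 * Im (cnj u * (f-x))) * \<i> * (of_real (2 * Im (cnj u * (g-x))) * \<i>)"
    unfolding w1_def w2_def u_def using wcnj[OF hx hy] by simp
  also have "\<dots> = - 4 * of_real (Im (cnj u * (f-x)) * Im (cnj u * (g-x)))"
    by (simp add: algebra_simps)
  also have "\<dots> = - 4 * of_real ((cmod u)^2) * of_real be" using h unfolding u_def by simp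
  also have "\<dots> = - 4 * (u * cnj u) * of_real be" by (simp only: complex_norm_square)
  finally have "(w1 * w2 * cnj u + 4 * u * of_real be) * cnj u = 0" by (simp add: algebra_simps)
  hence "w1 * w2 * cnj u + 4 * u * of_real be = 0" using cu0 by simp
  hence e1: "w1 * w2 * cnj u = - (4 * u * of_real be)" by (simp add: eq_neg_iff_add_eq_0)
  have "x * y * cnj u = - u" unfolding u_def using hx hy by (simp add: algebra_simps)
  have "w1 * w2 * (- u) = w1 * w2 * cnj u * (x * y)" using \<open>x * y * cnj u = - u\<close> by (simp add: algebra_simps)
  hence "w1 * w2 * (- u) = - (4 * u * of_real be) * (x * y)" using e1 by simp
  hence "(w1 * w2 - 4 * x * y * of_real be) * u = 0" by (simp add: algebra_simps)
  thus ?thesis using u0 unfolding w1_def w2_def by simp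
qed

lemma core:
  fixes e1 e2 p1 q1 p2 q2 r1 r2 :: real
  assumes r1: "r1 > 0" and r2: "r2 > 0" and hr1: "r1^2 = p1^2+q1^2" and hr2: "r2^2 = p2^2+q2^2"
    and orth: "(e1*p1+e2*q1)*r2 + (e1*p2+e2*q2)*r1 = 0"
    and lt: "(p1-p2)^2+(q1-q2)^2 < (r1+r2)^2"
  shows "(e1*q1-e2*p1)*(e1*q2-e2*p2) = (e1^2+e2^2)*(((r1+r2)^2 - ((p1-p2)^2+(q1-q2)^2))/4)"
proof -
  define E1 where "E1 = e1*p1+e2*q1"
  define E2 where "E2 = e1*p2+e2*q2"
  define N1 where "N1 = e1*q1-e2*p1"
  define N2 where "N2 = e1*q2-e2*p2"
  define ee where "ee = e1^2+e2^2"
  have lag1: "ee * r1^2 = E1^2 + N1^2" unfolding ee_def E1_def N1_def hr1 by algebra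
  have lag2: "ee * r2^2 = E2^2 + N2^2" unfolding ee_def E2_def N2_def hr2 by algebra
  have lag3: "ee * (p1*p2+q1*q2) = E1*E2 + N1*N2" unfolding ee_def E1_def E2_def N1_def N2_def by algebra
  have o: "E1*r2 = - (E2*r1)" using orth unfolding E1_def E2_def by linarith
  have "(E1*r2)^2 = (E2*r1)^2" using o by simp
  hence "N1^2 * r2^2 = N2^2 * r1^2" using lag1 lag2 by algebra
  hence "(N1*r2 - N2*r1)*(N1*r2 + N2*r1) = 0" by algebra
  hence cases: "N1*r2 = N2*r1 \<or> N1*r2 + N2*r1 = 0" by auto
  show ?thesis
  proof (cases "ee = 0")
    case True
    hence "e1 = 0" "e2 = 0" unfolding ee_def by (auto simp: sum_power2_eq_zero_iff)
    thus ?thesis by simp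
  next
    case ee0: False
    have N: "N1*r2 = N2*r1"
    proof (rule ccontr)
      assume "N1*r2 \<noteq> N2*r1"
      hence n: "N1*r2 + N2*r1 = 0" using cases by auto
      define X1 where "X1 = r2*p1 + r1*p2"
      define X2 where "X2 = r2*q1 + r1*q2"
      have a1: "e1*X1 + e2*X2 = 0" using orth unfolding X1_def X2_def by (simp add: algebra_simps)
      have a2: "e1*X2 - e2*X1 = 0" using n unfolding X1_def X2_def N1_def N2_def by (simp add: algebra_simps)
      have "ee * X1 = 0" "ee * X2 = 0" using a1 a2 unfolding ee_def by algebra+
      hence x1: "r1*p2 = - (r2*p1)" and x2: "r1*q2 = - (r2*q1)" using ee0 unfolding X1_def X2_def by auto
      have "r1^2 * ((p1-p2)^2+(q1-q2)^2) = (r1*p1 - r1*p2)^2 + (r1*q1 - r1*q2)^2" by algebra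
      also have "\<dots> = (r1+r2)^2 * r1^2" unfolding x1 x2 hr1 by algebra
      finally have "(p1-p2)^2+(q1-q2)^2 = (r1+r2)^2" using r1 by simp
      thus False using lt by simp
    qed
    have "r1 * (N1*N2 - E1*E2) = r1 * (ee*r1*r2)"
    proof -
      have "r1 * (N1*N2 - E1*E2) = N1*(N2*r1) - E1*(E2*r1)" by algebra
      also have "\<dots> = r2 * (E1^2 + N1^2)" using N o by algebra
      finally show ?thesis unfolding lag1[symmetric] by algebra
    qed
    hence k: "N1*N2 - E1*E2 = ee*r1*r2" using r1 by simp
    have "(r1+r2)^2 - ((p1-p2)^2+(q1-q2)^2) = 2*r1*r2 + 2*(p1*p2+q1*q2)"
      using hr1 hr2 by algebra
    hence "ee*(((r1+r2)^2 - ((p1-p2)^2+(q1-q2)^2))/4) = N1*N2"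
      using k lag3 by algebra
    thus ?thesis unfolding N1_def N2_def ee_def by simp
  qed
qed

lemma inner2: "(x::real^2) \<bullet> y = x$1*y$1 + x$2*y$2"
  by (simp add: inner_vec_def sum_2)

lemma norm2: "norm (x::real^2) = sqrt (x$1^2 + x$2^2)"
  by (simp add: norm_vec_def L2_set_def sum_2)

lemma norm2_sq: "(norm (x::real^2))^2 = x$1^2 + x$2^2"
  by (simp add: norm2)

definition cr :: "real^2 \<Rightarrow> real^2 \<Rightarrow> real" where "cr u v = u$1 * v$2 - u$2 * v$1"

lemma tangent_ellipse:
  assumes v: "dist F1 F2 < 2*a" and tl: "tangent_line Ellipse F1 F2 a X Y"
  shows "cr (Y-X) (F1-X) * cr (Y-X) (F2-X) = ((Y-X)$1^2+(Y-X)$2^2) * (a^2 - (dist F1 F2)^2/4)"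
proof -
  obtain P where P: "dist P F1 + dist P F2 = 2*a" "P \<in> line_through X Y"
      "(Y-X) \<bullet> (sgn (P-F1) + sgn (P-F2)) = 0"
    using tl by (auto simp: tangent_line_def conic_set_def conic_normal_def)
  obtain t where Pt: "P = X + t *\<^sub>R (Y-X)" using P(2) by (auto simp: line_through_def)
  define r1 where "r1 = norm (P-F1)"
  define r2 where "r2 = norm (P-F2)"
  have d1: "dist P F1 = r1" and d2: "dist P F2 = r2" by (simp_all add: r1_def r2_def dist_norm)
  have r1: "r1 > 0"
  proof (rule ccontr)
    assume "\<not> r1 > 0"
    hence "r1 = 0" unfolding r1_def by simp
    hence "P = F1" unfolding r1_def by simp
    thus False using P(1) v by simp
  qed
  have r2: "r2 > 0"
  proof (rule ccontr)
    assume "\<not> r2 > 0"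
    hence "r2 = 0" unfolding r2_def by simp
    hence "P = F2" unfolding r2_def by simp
    thus False using P(1) v by (simp add: dist_commute)
  qed
  have "(Y-X) \<bullet> (P-F1) / r1 + (Y-X) \<bullet> (P-F2) / r2 = 0"
    using P(3) by (simp add: sgn_div_norm inner_add_right r1_def r2_def divide_inverse mult.commute)
  hence orth: "((Y-X) \<bullet> (P-F1)) * r2 + ((Y-X) \<bullet> (P-F2)) * r1 = 0"
    using r1 r2 by (simp add: field_simps)
  have "dist F1 F2 < r1 + r2" using v P(1) d1 d2 by simp
  hence "(dist F1 F2)^2 < (r1+r2)^2" by (simp add: power_strict_mono)
  moreover have "(dist F1 F2)^2 = ((P-F1)$1 - (P-F2)$1)^2 + ((P-F1)$2 - (P-F2)$2)^2"
    by (simp add: dist_norm norm2_sq power2_commute)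
  ultimately have lt: "((P-F1)$1 - (P-F2)$1)^2 + ((P-F1)$2 - (P-F2)$2)^2 < (r1+r2)^2" by simp
  have hr1: "r1^2 = (P-F1)$1^2 + (P-F1)$2^2" unfolding r1_def by (rule norm2_sq)
  have hr2: "r2^2 = (P-F2)$1^2 + (P-F2)$2^2" unfolding r2_def by (rule norm2_sq)
  define N1 where "N1 = (Y-X)$1*(P-F1)$2-(Y-X)$2*(P-F1)$1"
  define N2 where "N2 = (Y-X)$1*(P-F2)$2-(Y-X)$2*(P-F2)$1"
  define ee where "ee = (Y-X)$1^2+(Y-X)$2^2"
  define S where "S = ((P-F1)$1-(P-F2)$1)^2+((P-F1)$2-(P-F2)$2)^2"
  have c: "N1 * N2 = ee*(((r1+r2)^2 - S)/4)"
    unfolding N1_def N2_def ee_def S_def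
    by (rule core[OF r1 r2 hr1 hr2 _ lt]) (use orth in \<open>simp add: inner2\<close>)
  have s: "r1 + r2 = 2*a" using P(1) d1 d2 by simp
  have f1: "F1 - X = t *\<^sub>R (Y-X) - (P - F1)" using Pt by (simp add: algebra_simps)
  have f2: "F2 - X = t *\<^sub>R (Y-X) - (P - F2)" using Pt by (simp add: algebra_simps)
  have cr1: "cr (Y-X) (F1-X) = - N1"
    unfolding f1 cr_def N1_def by (simp add: algebra_simps)
  have cr2: "cr (Y-X) (F2-X) = - N2"
    unfolding f2 cr_def N2_def by (simp add: algebra_simps)
  have dd: "(dist F1 F2)^2 = S" unfolding S_def
    by (simp add: dist_norm norm2_sq power2_commute)
  have e: "((r1+r2)^2 - S)/4 = a^2 - (dist F1 F2)^2/4" unfolding s dd by (simp add: power2_eq_square field_simps)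
  have "N1 * N2 = ee * (a^2 - (dist F1 F2)^2/4)" using c unfolding e .
  thus ?thesis unfolding cr1 cr2 ee_def by simp
qed

lemma alg2:
  fixes a b c p q pc qc be ca cb cc :: complex
  assumes ha: "a * ca = 1" and hb: "b * cb = 1" and hc: "c * cc = 1"
  and r1: "a+b+c - (p+q) = pc*qc*(a*b*c)"
  and r2: "4*be = 1 + p*qc + pc*q - (a+b+c)*(pc+qc) + (a*b+b*c+c*a)*pc*qc"
  and r3: "ca+cb+cc - (pc+qc) = p*q*(ca*cb*cc)"
  shows "4*be = (1 - p*pc)*(1 - q*qc)"
proof -
  have r4: "a*b+b*c+c*a - a*b*c*(pc+qc) = p*q" using ha hb hc r3 by algebra
  show ?thesis using r1 r2 r4 by algebra
qed

definition cpt :: "real^2 \<Rightarrow> real^2 \<Rightarrow> real \<Rightarrow> complex" where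
  "cpt Z X R = Complex ((X$1 - Z$1)/R) ((X$2 - Z$2)/R)"

lemma cpt_unit:
  assumes "dist Z X = R" "R > 0"
  shows "cpt Z X R * cnj (cpt Z X R) = 1"
proof -
  have "(X$1-Z$1)^2 + (X$2-Z$2)^2 = R^2"
    using assms(1) by (simp add: dist_norm norm2_sq flip: power2_commute) (metis norm2_sq vector_minus_component power2_commute)
  hence h1: "((X$1-Z$1)/R)^2 + ((X$2-Z$2)/R)^2 = 1" using assms(2)
    by (simp add: power_divide flip: add_divide_distrib)
  have "cpt Z X R * cnj (cpt Z X R) = of_real (((X$1-Z$1)/R)^2 + ((X$2-Z$2)/R)^2)"
    by (simp add: cpt_def complex_eq_iff power2_eq_square)
  thus ?thesis using h1 by simp
qed

lemma cpt_im:
  assumes "R > 0"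
  shows "Im (cnj (cpt Z Y R - cpt Z X R) * (cpt Z F R - cpt Z X R)) = cr (Y-X) (F-X) / R^2"
  using assms by (simp add: cpt_def cr_def field_simps power2_eq_square)

lemma cpt_cmod:
  assumes "R > 0"
  shows "(cmod (cpt Z Y R - cpt Z X R))^2 = ((Y-X)$1^2 + (Y-X)$2^2) / R^2"
  unfolding cmod_power2 using assms by (simp add: cpt_def field_simps power2_eq_square)

lemma cpt_inj:
  assumes "R > 0" "cpt Z X R = cpt Z Y R"
  shows "X = Y"
proof -
  have "X$1 = Y$1" "X$2 = Y$2" using assms by (auto simp: cpt_def complex_eq_iff)
  thus ?thesis by (simp add: vec_eq_iff forall_2)
qed

lemma cpt_tangent:
  assumes R: "R > 0" and hX: "dist Z X = R" and hY: "dist Z Y = R" and XY: "X \<noteq> Y"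
    and v: "dist F1 F2 < 2*a" and tl: "tangent_line Ellipse F1 F2 a X Y"
  shows "(cpt Z F1 R + cpt Z X R * cpt Z Y R * cnj (cpt Z F1 R) - cpt Z X R - cpt Z Y R) *
         (cpt Z F2 R + cpt Z X R * cpt Z Y R * cnj (cpt Z F2 R) - cpt Z X R - cpt Z Y R) =
         4 * cpt Z X R * cpt Z Y R * of_real ((a^2 - (dist F1 F2)^2/4) / R^2)"
proof (rule tang_complex)
  show "cpt Z X R * cnj (cpt Z X R) = 1" by (rule cpt_unit[OF hX R])
  show "cpt Z Y R * cnj (cpt Z Y R) = 1" by (rule cpt_unit[OF hY R])
  show "cpt Z X R \<noteq> cpt Z Y R" using cpt_inj[OF R] XY by blast
  have t: "cr (Y-X) (F1-X) * cr (Y-X) (F2-X) = ((Y-X)$1^2+(Y-X)$2^2) * (a^2 - (dist F1 F2)^2/4)"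
    by (rule tangent_ellipse[OF v tl])
  show "Im (cnj (cpt Z Y R - cpt Z X R) * (cpt Z F1 R - cpt Z X R)) *
        Im (cnj (cpt Z Y R - cpt Z X R) * (cpt Z F2 R - cpt Z X R)) =
        (cmod (cpt Z Y R - cpt Z X R))^2 * ((a^2 - (dist F1 F2)^2/4) / R^2)"
    unfolding cpt_im[OF R] cpt_cmod[OF R] using t R by (simp add: field_simps power2_eq_square)
qed

lemma cpt_cmod0:
  assumes "R > 0"
  shows "(cmod (cpt Z X R))^2 = (dist Z X)^2 / R^2"
proof -
  have "(dist Z X)^2 = (X$1 - Z$1)^2 + (X$2 - Z$2)^2"
    by (simp add: dist_norm norm2_sq power2_commute)
  thus ?thesis unfolding cmod_power2 using assms by (simp add: cpt_def power_divide add_divide_distrib)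
qed

theorem proposition2p5:
  fixes A B C Oc F1 F2 :: "real^2" and R a :: real and k :: conic_kind
  assumes "\<not> collinear {A, B, C}"
    and "dist Oc A = R" and "dist Oc B = R" and "dist Oc C = R"
    and "valid_conic k F1 F2 a"
    and "tangent_line k F1 F2 a A B"
    and "tangent_line k F1 F2 a B C"
    and "tangent_line k F1 F2 a C A"
    and "R ^ 2 = dist Oc F1 * dist Oc F2"
  shows "k = Hyperbola"
proof (cases k)
  case Hyperbola
  thus ?thesis .
next
  case Ellipse
  have v: "dist F1 F2 < 2*a" using assms(5) Ellipse by (simp add: valid_conic_def)
  have AB: "A \<noteq> B"
  proof
    assume "A = B"
    hence "{A,B,C} = {A,C}" by auto
    thus False using assms(1) collinear_2 by metis
  qed
  have BC: "B \<noteq> C"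
  proof
    assume "B = C"
    hence "{A,B,C} = {A,B}" by auto
    thus False using assms(1) collinear_2 by metis
  qed
  have CA: "C \<noteq> A"
  proof
    assume "C = A"
    hence "{A,B,C} = {A,B}" by auto
    thus False using assms(1) collinear_2 by metis
  qed
  have R: "R > 0"
  proof (rule ccontr)
    assume "\<not> R > 0"
    moreover have "R \<ge> 0" using assms(2) by auto
    ultimately have "R = 0" by simp
    hence "A = Oc" "B = Oc" using assms(2,3) by auto
    thus False using AB by simp
  qed
  define be where "be = a^2 - (dist F1 F2)^2/4"
  have be0: "be > 0"
  proof -
    have "0 \<le> dist F1 F2" by simp
    hence "(dist F1 F2)^2 < (2*a)^2" using v by (intro power_strict_mono) auto
    thus ?thesis unfolding be_def by (simp add: power2_eq_square)
  qed
  define x where "x = cpt Oc A R"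
  define y where "y = cpt Oc B R"
  define z where "z = cpt Oc C R"
  define p where "p = cpt Oc F1 R"
  define q where "q = cpt Oc F2 R"
  define b' where "b' = complex_of_real (be / R^2)"
  have Eab: "(p + x*y*cnj p - x - y)*(q + x*y*cnj q - x - y) = 4*x*y*b'"
    unfolding x_def y_def p_def q_def b'_def be_def
    using cpt_tangent[OF R assms(2) assms(3) AB v] assms(6) Ellipse by simp
  have Ebc: "(p + y*z*cnj p - y - z)*(q + y*z*cnj q - y - z) = 4*y*z*b'"
    unfolding z_def y_def p_def q_def b'_def be_def
    using cpt_tangent[OF R assms(3) assms(4) BC v] assms(7) Ellipse by simp
  have Eca: "(p + z*x*cnj p - z - x)*(q + z*x*cnj q - z - x) = 4*z*x*b'"
    unfolding z_def x_def p_def q_def b'_def be_def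
    using cpt_tangent[OF R assms(4) assms(2) CA v] assms(8) Ellipse by simp
  have xy: "x \<noteq> y" unfolding x_def y_def using cpt_inj[OF R] AB by blast
  have yz: "y \<noteq> z" unfolding z_def y_def using cpt_inj[OF R] BC by blast
  have zx: "z \<noteq> x" unfolding z_def x_def using cpt_inj[OF R] CA by blast
  note r = alg1[OF xy yz zx Eab Ebc Eca]
  have "cnj (x+y+z - (p+q)) = cnj (cnj p * cnj q * (x*y*z))" using r(1) by simp
  hence r3: "cnj x + cnj y + cnj z - (cnj p + cnj q) = p*q*(cnj x*cnj y*cnj z)" by simp
  have ux: "x * cnj x = 1" unfolding x_def by (rule cpt_unit[OF assms(2) R])
  have uy: "y * cnj y = 1" unfolding y_def by (rule cpt_unit[OF assms(3) R])
  have uz: "z * cnj z = 1" unfolding z_def by (rule cpt_unit[OF assms(4) R])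
  have fin: "4*b' = (1 - p*cnj p)*(1 - q*cnj q)" by (rule alg2[OF ux uy uz r(1) r(2) r3])
  have pp: "p * cnj p = of_real ((dist Oc F1)^2/R^2)"
    unfolding p_def by (simp only: complex_norm_square[symmetric] cpt_cmod0[OF R])
  have qq: "q * cnj q = of_real ((dist Oc F2)^2/R^2)"
    unfolding q_def by (simp only: complex_norm_square[symmetric] cpt_cmod0[OF R])
  have "complex_of_real (4 * (be/R^2)) = complex_of_real ((1 - (dist Oc F1)^2/R^2) * (1 - (dist Oc F2)^2/R^2))"
    using fin unfolding pp qq b'_def by simp
  hence key: "4 * (be/R^2) = (1 - (dist Oc F1)^2/R^2) * (1 - (dist Oc F2)^2/R^2)"
    by (simp only: of_real_eq_iff)
  define d1 where "d1 = dist Oc F1"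
  define d2 where "d2 = dist Oc F2"
  have RR: "R^2 = d1 * d2" using assms(9) unfolding d1_def d2_def .
  have R2: "R^2 > 0" using R by simp
  have aux: "\<And>r::real. r > 0 \<Longrightarrow> 4 * (be/r) = (1 - d1^2/r) * (1 - d2^2/r) \<Longrightarrow> 4 * be * r = (r - d1^2) * (r - d2^2)"
  proof -
    fix r :: real assume r: "r > 0" and h: "4 * (be/r) = (1 - d1^2/r) * (1 - d2^2/r)"
    have "(1 - d1^2/r) * (1 - d2^2/r) = ((r - d1^2) * (r - d2^2)) / r^2" using r by (simp add: field_simps power2_eq_square)
    moreover have "4 * (be/r) = (4 * be * r) / r^2" using r by (simp add: power2_eq_square)
    ultimately have "(4 * be * r) / r^2 = ((r - d1^2) * (r - d2^2)) / r^2" using h by simp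
    thus "4 * be * r = (r - d1^2) * (r - d2^2)" using r by simp
  qed
  have "4 * be * R^2 = (R^2 - d1^2) * (R^2 - d2^2)"
    by (rule aux[OF R2]) (use key in \<open>simp add: d1_def d2_def\<close>)
  also have "\<dots> = - (R^2 * (d1 - d2)^2)" using RR by algebra
  finally have "R^2 * (4 * be + (d1 - d2)^2) = 0" by (simp add: algebra_simps)
  hence "4 * be + (d1 - d2)^2 = 0" using R2 by simp
  moreover have "4 * be + (d1 - d2)^2 > 0" using be0 by (simp add: add_pos_nonneg)
  ultimately show ?thesis by simp
qed

end
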